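(* Assume (H1) and (H2) as in the context. Let $G:S^1\times(a,b)\to\mathbb{R}$ be $G(\zeta,s)=\langle\varphi(1,s),\zeta\rangle$, with $G_s,G_{ss}$ its first and second partial derivatives in $s$. Then for every $\zeta=(\zeta_1,\zeta_2)\in S^1$ and every $s\in(a,b)$, $$\alpha_1^2\det\big(\zeta_1\varphi_1''(1,s)+\zeta_2\varphi_2''(1,s)\big)=m(m-\alpha_1)(GG_{ss})(\zeta,s)+\alpha_2(\alpha_1-\alpha_2)\,s\,(G_sG_{ss})(\zeta,s)-(m-\alpha_2)^2G_s^2(\zeta,s).$$
   Context: Fix $\alpha_1,\alpha_2>0$ with $\alpha_1\neq\alpha_2$. For $t>0$ and $x=(x_1,x_2)\in\mathbb{R}^2$ put $t\bullet x=(t^{\alpha_1}x_1,t^{\alpha_2}x_2)$. For $a<b$ let $V^{a,b}=\{t\bullet(1,s):a<s<b,\ t>0\}$ and $\varphi=(\varphi_1,\varphi_2):V^{a,b}\to\mathbb{R}^2$; $\varphi_j''(x)$ denotes the Hessian of $\varphi_j$ at $x$. (H1) $\varphi$ is real analytic on $V^{a,b}$. (H2) For some $m\ge3(\alpha_1+\alpha_2)$, $\varphi(t\bullet x)=t^m\varphi(x)$ for all $x\in V^{a,b}$, $t>0$. *)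

theory Defs
  imports "HOL-Analysis.Analysis"
begin

definition qdil :: "real \<Rightarrow> real \<Rightarrow> real \<Rightarrow> real^2 \<Rightarrow> real^2" where
  "qdil \<alpha>1 \<alpha>2 t x = vector [t powr \<alpha>1 * x$1, t powr \<alpha>2 * x$2]"

definition Vcone :: "real \<Rightarrow> real \<Rightarrow> real \<Rightarrow> real \<Rightarrow> (real^2) set" where
  "Vcone \<alpha>1 \<alpha>2 a b = {qdil \<alpha>1 \<alpha>2 t (vector [1, s]) | t s. 0 < t \<and> a < s \<and> s < b}"

text \<open>Real analyticity of a function of two real variables on a set U:
  around every point of U it is given by an (unconditionally, i.e. absolutely)
  convergent double power series on a ball contained in U.\<close>
definition real_analytic_on2 :: "(real^2 \<Rightarrow> real) \<Rightarrow> (real^2) set \<Rightarrow> bool" where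
  "real_analytic_on2 f U \<longleftrightarrow>
     (\<forall>p\<in>U. \<exists>r>0. ball p r \<subseteq> U \<and> (\<exists>c :: nat \<Rightarrow> nat \<Rightarrow> real.
        \<forall>x\<in>ball p r. ((\<lambda>(i,j). c i j * (x$1 - p$1)^i * (x$2 - p$2)^j) has_sum f x) UNIV))"

definition partial :: "2 \<Rightarrow> (real^2 \<Rightarrow> real) \<Rightarrow> real^2 \<Rightarrow> real" where
  "partial i f x = deriv (\<lambda>t. f (x + t *\<^sub>R axis i 1)) 0"

definition hessian :: "(real^2 \<Rightarrow> real) \<Rightarrow> real^2 \<Rightarrow> real^2^2" where
  "hessian f x = (\<chi> i j. partial i (partial j f) x)"

end

theory Submission
  imports Defs
begin
lemma ps_twice:
  fixes g :: "real \<Rightarrow> real" and c :: "nat \<Rightarrow> real"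
  assumes r: "r > 0" and S: "\<And>h. \<bar>h\<bar> < r \<Longrightarrow> (\<lambda>j. c j * h^j) sums g (s+h)"
  shows "(g has_real_derivative deriv g s) (at s) \<and> (deriv g has_real_derivative deriv (deriv g) s) (at s)"
proof -
  define P where "P = (\<lambda>x::real. \<Sum>n. c n * x^n)"
  define P' where "P' = (\<lambda>x::real. \<Sum>n. diffs c n * x^n)"
  have sm: "summable (\<lambda>n. c n * x^n)" if "norm x < r" for x
    using S[of x] that sums_summable by auto
  have gP: "g v = P (v - s)" if "v \<in> ball s r" for v
    using S[of "v - s"] that by (auto simp: P_def dist_real_def sums_iff)
  have dP: "DERIV P x :> P' x" if "norm x < r" for x
    unfolding P_def P'_def by (rule termdiffs_strong'[OF sm that])
  have sm': "summable (\<lambda>n. diffs c n * x^n)" if "norm x < r" for x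
    by (rule termdiff_converges[OF that sm])
  have dP': "DERIV P' x :> (\<Sum>n. diffs (diffs c) n * x^n)" if "norm x < r" for x
    unfolding P'_def by (rule termdiffs_strong'[OF sm' that])
  have dg: "DERIV g v :> P' (v - s)" if "v \<in> ball s r" for v
  proof (rule has_field_derivative_transform_within_open[where S="ball s r"])
    have "norm (v - s) < r" using that by (auto simp: dist_real_def)
    hence d1: "DERIV P (v - s) :> P' (v - s)" by (rule dP)
    have d2: "DERIV (\<lambda>v. v - s) v :> 1" by (auto intro!: derivative_eq_intros)
    from DERIV_chain2[OF d1 d2]
    show "DERIV (\<lambda>v. P (v - s)) v :> P' (v - s)" by simp
  qed (use that gP in auto)
  have dgeq: "deriv g v = P' (v - s)" if "v \<in> ball s r" for v
    using dg[OF that] by (rule DERIV_imp_deriv)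
  have "DERIV (deriv g) s :> (\<Sum>n. diffs (diffs c) n * 0^n)"
  proof (rule has_field_derivative_transform_within_open[where S="ball s r"])
    have d1: "DERIV P' (s - s) :> (\<Sum>n. diffs (diffs c) n * 0^n)" using dP'[of 0] r by simp
    have d2: "DERIV (\<lambda>v. v - s) s :> 1" by (auto intro!: derivative_eq_intros)
    from DERIV_chain2[OF d1 d2]
    show "DERIV (\<lambda>v. P' (v - s)) s :> (\<Sum>n. diffs (diffs c) n * 0^n)" by simp
  qed (use r dgeq in auto)
  moreover have "DERIV g s :> P' (s - s)" using dg[of s] r by simp
  ultimately show ?thesis by (metis DERIV_imp_deriv)
qed
lemma analytic_line:
  assumes "real_analytic_on2 f U" "vector[1,s] \<in> U"
  shows "\<exists>r>0. \<exists>c. \<forall>h. \<bar>h\<bar> < r \<longrightarrow> (\<lambda>j. c j * h^j) sums f (vector[1, s+h])"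
proof -
  obtain r c where r: "r > 0" and c: "\<And>x. x \<in> ball (vector[1,s]) r \<Longrightarrow>
     ((\<lambda>(i,j). c i j * (x$1 - (vector[1,s]::real^2)$1)^i * (x$2 - (vector[1,s]::real^2)$2)^j) has_sum f x) UNIV"
    using assms unfolding real_analytic_on2_def by blast
  have "(\<lambda>j. c 0 j * h^j) sums f (vector[1, s+h])" if h: "\<bar>h\<bar> < r" for h
  proof -
    have "dist (vector[1,s]) (vector[1, s+h] :: real^2) = \<bar>h\<bar>"
      by (simp add: dist_norm norm_vec_def L2_set_def sum_2)
    hence "(vector[1, s+h] :: real^2) \<in> ball (vector[1,s]) r" using h by (simp only: mem_ball)
    from c[OF this] have H: "((\<lambda>(i,j). c i j * 0^i * h^j) has_sum f (vector[1, s+h])) UNIV"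
      by simp
    have "((\<lambda>(i,j). c i j * 0^i * h^j) has_sum f (vector[1, s+h])) (range (\<lambda>j. (0::nat,j)))"
      using H by (subst has_sum_cong_neutral[where T=UNIV and g="(\<lambda>(i,j). c i j * 0^i * h^j)"]) auto
    hence "((\<lambda>j. c 0 j * h^j) has_sum f (vector[1, s+h])) UNIV"
      by (subst (asm) has_sum_reindex) (auto simp: inj_on_def o_def)
    thus ?thesis by (rule has_sum_imp_sums)
  qed
  thus ?thesis using r by blast
qed

lemma DERIV_eqD: "DERIV f x :> D \<Longrightarrow> D = E \<Longrightarrow> DERIV f x :> E" by simp

lemma D_pow: fixes y1 r :: real shows "0 < y1 \<Longrightarrow> DERIV (\<lambda>t. (y1+t) powr r) 0 :> r * y1 powr (r-1)"
  using DERIV_fun_powr[of "\<lambda>t. y1+t" 1 0 r] by (auto intro!: derivative_eq_intros)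

lemma D_comp:
  fixes y1 c \<beta> h' :: real and h :: "real \<Rightarrow> real"
  assumes "0 < y1" "DERIV h (c * y1 powr (-\<beta>)) :> h'"
  shows "DERIV (\<lambda>t. h (c * (y1+t) powr (-\<beta>))) 0 :> h' * (c * (-\<beta> * y1 powr (-\<beta>-1)))"
proof -
  have 1: "DERIV h ((\<lambda>t. c * (y1+t) powr (-\<beta>)) 0) :> h'" using assms by simp
  have 2: "DERIV (\<lambda>t. c * (y1+t) powr (-\<beta>)) 0 :> c * (-\<beta> * y1 powr (-\<beta>-1))"
  proof -
    have "DERIV (\<lambda>t. (y1+t) powr (-\<beta>)) 0 :> (-\<beta>) * y1 powr (-\<beta>-1)"
      using D_pow[OF assms(1), of "-\<beta>"] by simp
    from DERIV_cmult[OF this, of c] show ?thesis by simp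
  qed
  from DERIV_chain2[OF 1 2] show ?thesis .
qed

lemma D_comp2:
  fixes y2 c h' :: real and h :: "real \<Rightarrow> real"
  assumes "DERIV h (y2 * c) :> h'"
  shows "DERIV (\<lambda>t. h ((y2+t) * c)) 0 :> h' * c"
proof -
  have 1: "DERIV h ((\<lambda>t. (y2+t) * c) 0) :> h'" using assms by simp
  have 2: "DERIV (\<lambda>t. (y2+t) * c) 0 :> c"
    by (auto intro!: derivative_eq_intros)
  from DERIV_chain2[OF 1 2] show ?thesis .
qed

lemma axis_comp [simp]:
  "(y + t *\<^sub>R axis 1 1 :: real^2)$1 = y$1 + t" "(y + t *\<^sub>R axis 1 1 :: real^2)$2 = y$2"
  "(y + t *\<^sub>R axis 2 1 :: real^2)$1 = y$1" "(y + t *\<^sub>R axis 2 1 :: real^2)$2 = y$2 + t"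
  by (simp_all add: axis_def)

lemma partial_eqI:
  assumes "open W" "y \<in> W" "\<And>z. z \<in> W \<Longrightarrow> f z = F z"
    "((\<lambda>t. F (y + t *\<^sub>R axis i 1)) has_real_derivative D) (at 0)"
  shows "partial i f y = D"
proof -
  have "((\<lambda>t. y + t *\<^sub>R axis i 1) \<longlongrightarrow> y + 0 *\<^sub>R axis i 1) (nhds 0)"
    by (intro tendsto_intros filterlim_ident)
  hence "((\<lambda>t. y + t *\<^sub>R axis i 1) \<longlongrightarrow> y) (nhds 0)" by simp
  hence "eventually (\<lambda>t. y + t *\<^sub>R axis i 1 \<in> W) (nhds 0)"
    using assms(1,2) by (rule topological_tendstoD)
  hence ev: "eventually (\<lambda>t. f (y + t *\<^sub>R axis i 1) = F (y + t *\<^sub>R axis i 1)) (nhds 0)"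
    by eventually_elim (use assms(3) in auto)
  have "((\<lambda>t. f (y + t *\<^sub>R axis i 1)) has_real_derivative D) (at 0)"
    using DERIV_cong_ev[OF refl ev refl] assms(4) by blast
  thus ?thesis unfolding partial_def by (rule DERIV_imp_deriv)
qed

lemma open_W: "open {y::real^2. 0 < y$1 \<and> a < y$2 * y$1 powr (-\<beta>) \<and> y$2 * y$1 powr (-\<beta>) < b}"
proof -
  have "{y::real^2. 0 < y$1 \<and> a < y$2 * y$1 powr (-\<beta>) \<and> y$2 * y$1 powr (-\<beta>) < b}
     = {y. 0 < y$1} \<inter> (\<lambda>y. y$2 * y$1 powr (-\<beta>)) -` {a<..<b}" by auto
  also have "open \<dots>"
    by (intro continuous_open_preimage continuous_intros open_halfspace_component_gt_cart open_greaterThanLessThan) auto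
  finally show ?thesis .
qed

lemma model_hessian:
  fixes f :: "real^2 \<Rightarrow> real" and g g1 :: "real \<Rightarrow> real"
  assumes s: "a < s" "s < b"
    and gd: "\<And>v. a < v \<Longrightarrow> v < b \<Longrightarrow> DERIV g v :> g1 v"
    and g1d: "DERIV g1 s :> g2"
    and feq: "\<And>y. 0 < y$1 \<Longrightarrow> a < y$2 * y$1 powr (-\<beta>) \<Longrightarrow> y$2 * y$1 powr (-\<beta>) < b \<Longrightarrow>
                 f y = y$1 powr k * g (y$2 * y$1 powr (-\<beta>))"
  shows "hessian f (vector[1,s]) $1$1 = k*(k-1)*g s - \<beta> * s * (2 * k - \<beta> - 1) * g1 s + \<beta>^2 * s^2 * g2"
    "hessian f (vector[1,s]) $1$2 = (k-\<beta>)*g1 s - \<beta> * s * g2"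
    "hessian f (vector[1,s]) $2$1 = (k-\<beta>)*g1 s - \<beta> * s * g2"
    "hessian f (vector[1,s]) $2$2 = g2"
proof -
  define W where "W = {y::real^2. 0 < y$1 \<and> a < y$2 * y$1 powr (-\<beta>) \<and> y$2 * y$1 powr (-\<beta>) < b}"
  have oW: "open W" unfolding W_def by (rule open_W)
  define p :: "real^2" where "p = vector[1,s]"
  have pW: "p \<in> W" using s by (simp add: W_def p_def)
  define F where "F = (\<lambda>y::real^2. y$1 powr k * g (y$2 * y$1 powr (-\<beta>)))"
  define P1 where "P1 = (\<lambda>y::real^2. k * y$1 powr (k-1) * g (y$2 * y$1 powr (-\<beta>))
      - \<beta> * y$2 * y$1 powr (k-\<beta>-1) * g1 (y$2 * y$1 powr (-\<beta>)))"
  define P2 where "P2 = (\<lambda>y::real^2. y$1 powr (k-\<beta>) * g1 (y$2 * y$1 powr (-\<beta>)))"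
  have fF: "f z = F z" if "z \<in> W" for z using that feq by (auto simp: W_def F_def)
  have p1: "partial 1 f y = P1 y" if y: "y \<in> W" for y
  proof (rule partial_eqI[OF oW y fF])
    have y1: "0 < y$1" and u: "a < y$2 * y$1 powr (-\<beta>)" "y$2 * y$1 powr (-\<beta>) < b" using y by (auto simp: W_def)
    have A: "DERIV (\<lambda>t. (y$1+t) powr k) 0 :> k * y$1 powr (k-1)" by (rule D_pow[OF y1])
    have B: "DERIV (\<lambda>t. g (y$2 * (y$1+t) powr (-\<beta>))) 0 :> g1 (y$2 * y$1 powr (-\<beta>)) * (y$2 * (-\<beta> * y$1 powr (-\<beta>-1)))"
      by (rule D_comp[OF y1 gd[OF u]])
    show "DERIV (\<lambda>t. F (y + t *\<^sub>R axis 1 1)) 0 :> P1 y"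
      unfolding F_def axis_comp
      apply (rule DERIV_eqD[OF DERIV_mult[OF A B]])
      using y1 by (simp add: P1_def algebra_simps flip: powr_add)
  qed
  have p2: "partial 2 f y = P2 y" if y: "y \<in> W" for y
  proof (rule partial_eqI[OF oW y fF])
    have y1: "0 < y$1" and u: "a < y$2 * y$1 powr (-\<beta>)" "y$2 * y$1 powr (-\<beta>) < b" using y by (auto simp: W_def)
    have B: "DERIV (\<lambda>t. g ((y$2 + t) * y$1 powr (-\<beta>))) 0 :> g1 (y$2 * y$1 powr (-\<beta>)) * y$1 powr (-\<beta>)"
      by (rule D_comp2[OF gd[OF u]])
    show "DERIV (\<lambda>t. F (y + t *\<^sub>R axis 2 1)) 0 :> P2 y"
      unfolding F_def axis_comp
      apply (rule DERIV_eqD[OF DERIV_cmult[OF B]])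
      using y1 by (simp add: P2_def algebra_simps flip: powr_add)
  qed
  show "hessian f (vector[1,s]) $1$1 = k*(k-1)*g s - \<beta> * s * (2 * k - \<beta> - 1) * g1 s + \<beta>^2 * s^2 * g2"
  proof -
    have "partial 1 (partial 1 f) p = k*(k-1)*g s - \<beta> * s * (2 * k - \<beta> - 1) * g1 s + \<beta>^2 * s^2 * g2"
    proof (rule partial_eqI[OF oW pW p1])
      have one: "(0::real) < 1" by simp
      have s': "a < s * 1 powr (-\<beta>)" "s * 1 powr (-\<beta>) < b" using s by auto
      have A: "DERIV (\<lambda>t. (1+t) powr (k-1)) 0 :> (k-1) * 1 powr (k-1-1)" by (rule D_pow[OF one])
      have B: "DERIV (\<lambda>t. g (s * (1+t) powr (-\<beta>))) 0 :> g1 (s * 1 powr (-\<beta>)) * (s * (-\<beta> * 1 powr (-\<beta>-1)))"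
        by (rule D_comp[OF one gd[OF s']])
      have A2: "DERIV (\<lambda>t. (1+t) powr (k-\<beta>-1)) 0 :> (k-\<beta>-1) * 1 powr (k-\<beta>-1-1)" by (rule D_pow[OF one])
      have g1d': "DERIV g1 (s * 1 powr (-\<beta>)) :> g2" using g1d by simp
      have B2: "DERIV (\<lambda>t. g1 (s * (1+t) powr (-\<beta>))) 0 :> g2 * (s * (-\<beta> * 1 powr (-\<beta>-1)))"
        by (rule D_comp[OF one g1d'])
      show "DERIV (\<lambda>t. P1 (p + t *\<^sub>R axis 1 1)) 0 :> k*(k-1)*g s - \<beta> * s * (2 * k - \<beta> - 1) * g1 s + \<beta>^2 * s^2 * g2"
        unfolding P1_def axis_comp p_def vector_2
        apply (rule DERIV_eqD[OF DERIV_diff[OF DERIV_mult[OF DERIV_cmult[OF A, of k] B] DERIV_mult[OF DERIV_cmult[OF A2, of "\<beta> * s"] B2]]])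
        by (simp add: algebra_simps power2_eq_square)
    qed
    thus ?thesis by (simp add: hessian_def p_def)
  qed
  show "hessian f (vector[1,s]) $1$2 = (k-\<beta>)*g1 s - \<beta> * s * g2"
  proof -
    have "partial 1 (partial 2 f) p = (k-\<beta>)*g1 s - \<beta> * s * g2"
    proof (rule partial_eqI[OF oW pW p2])
      have one: "(0::real) < 1" by simp
      have A: "DERIV (\<lambda>t. (1+t) powr (k-\<beta>)) 0 :> (k-\<beta>) * 1 powr (k-\<beta>-1)" by (rule D_pow[OF one])
      have g1d': "DERIV g1 (s * 1 powr (-\<beta>)) :> g2" using g1d by simp
      have B2: "DERIV (\<lambda>t. g1 (s * (1+t) powr (-\<beta>))) 0 :> g2 * (s * (-\<beta> * 1 powr (-\<beta>-1)))"
        by (rule D_comp[OF one g1d'])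
      show "DERIV (\<lambda>t. P2 (p + t *\<^sub>R axis 1 1)) 0 :> (k-\<beta>)*g1 s - \<beta> * s * g2"
        unfolding P2_def axis_comp p_def vector_2
        apply (rule DERIV_eqD[OF DERIV_mult[OF A B2]])
        by (simp add: algebra_simps)
    qed
    thus ?thesis by (simp add: hessian_def p_def)
  qed
  show "hessian f (vector[1,s]) $2$1 = (k-\<beta>)*g1 s - \<beta> * s * g2"
  proof -
    have "partial 2 (partial 1 f) p = (k-\<beta>)*g1 s - \<beta> * s * g2"
    proof (rule partial_eqI[OF oW pW p1])
      have s': "a < s * 1" "s * 1 < b" using s by auto
      have B: "DERIV (\<lambda>t. g ((s + t) * 1)) 0 :> g1 (s * 1) * 1"
        by (rule D_comp2[OF gd[OF s']])
      have g1d': "DERIV g1 (s * 1) :> g2" using g1d by simp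
      have B2: "DERIV (\<lambda>t. g1 ((s + t) * 1)) 0 :> g2 * 1"
        by (rule D_comp2[OF g1d'])
      have L: "DERIV (\<lambda>t. s + t) 0 :> 1" by (auto intro!: derivative_eq_intros)
      show "DERIV (\<lambda>t. P1 (p + t *\<^sub>R axis 2 1)) 0 :> (k-\<beta>)*g1 s - \<beta> * s * g2"
        unfolding P1_def axis_comp p_def vector_2
        apply (simp only: powr_one_eq_one mult_1_right)
        apply (rule DERIV_eqD[OF DERIV_diff[OF DERIV_cmult[OF B[simplified]] DERIV_mult[OF DERIV_cmult[OF L, of \<beta>] B2[simplified]]]])
        by (simp add: algebra_simps)
    qed
    thus ?thesis by (simp add: hessian_def p_def)
  qed
  show "hessian f (vector[1,s]) $2$2 = g2"
  proof -
    have "partial 2 (partial 2 f) p = g2"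
    proof (rule partial_eqI[OF oW pW p2])
      have g1d': "DERIV g1 (s * 1) :> g2" using g1d by simp
      have B2: "DERIV (\<lambda>t. g1 ((s + t) * 1)) 0 :> g2 * 1"
        by (rule D_comp2[OF g1d'])
      show "DERIV (\<lambda>t. P2 (p + t *\<^sub>R axis 2 1)) 0 :> g2"
        unfolding P2_def axis_comp p_def vector_2
        using B2 by simp
    qed
    thus ?thesis by (simp add: hessian_def p_def)
  qed
qed

lemma alg:
  fixes k \<beta> s G G1 G2 :: real
  shows "(k*(k-1)*G - \<beta> * s * (2 * k - \<beta> - 1) * G1 + \<beta>^2 * s^2 * G2) * G2 - ((k-\<beta>)*G1 - \<beta> * s * G2)^2
     = k*(k-1)*G*G2 + \<beta>*(1-\<beta>) * s * G1 * G2 - (k-\<beta>)^2*G1^2"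
  by (simp add: algebra_simps power2_eq_square)

lemma alg2:
  fixes a1 a2 m s G G1 G2 :: real
  assumes "a1 \<noteq> 0"
  shows "a1^2 * ((m/a1)*((m/a1)-1)*G*G2 + (a2/a1)*(1-(a2/a1)) * s * G1 * G2 - ((m/a1)-(a2/a1))^2*G1^2)
     = m * (m - a1) * (G * G2) + a2 * (a1 - a2) * s * (G1 * G2) - (m - a2)^2 * G1^2"
  using assms by (simp add: field_simps power2_eq_square)

lemma vec2_eq: "(x::real^2) = vector[x$1, x$2]"
  by (simp add: vec_eq_iff forall_2)

theorem lemma2p3:
  fixes \<alpha>1 \<alpha>2 a b m :: real
    and \<phi>1 \<phi>2 :: "real^2 \<Rightarrow> real"
    and G :: "real \<Rightarrow> real \<Rightarrow> real \<Rightarrow> real"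
  assumes "\<alpha>1 > 0" and "\<alpha>2 > 0" and "\<alpha>1 \<noteq> \<alpha>2" and "a < b"
    and H1: "real_analytic_on2 \<phi>1 (Vcone \<alpha>1 \<alpha>2 a b)"
            "real_analytic_on2 \<phi>2 (Vcone \<alpha>1 \<alpha>2 a b)"
    and H2m: "m \<ge> 3 * (\<alpha>1 + \<alpha>2)"
    and H2: "\<And>x t. x \<in> Vcone \<alpha>1 \<alpha>2 a b \<Longrightarrow> t > 0 \<Longrightarrow>
               \<phi>1 (qdil \<alpha>1 \<alpha>2 t x) = t powr m * \<phi>1 x \<and>
               \<phi>2 (qdil \<alpha>1 \<alpha>2 t x) = t powr m * \<phi>2 x"
    and G_def: "\<And>\<zeta>1 \<zeta>2 s. G \<zeta>1 \<zeta>2 s = \<phi>1 (vector [1, s]) * \<zeta>1 + \<phi>2 (vector [1, s]) * \<zeta>2"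
  shows "\<forall>\<zeta>1 \<zeta>2 s. \<zeta>1\<^sup>2 + \<zeta>2\<^sup>2 = 1 \<and> a < s \<and> s < b \<longrightarrow>
    (let Gs = (\<lambda>u. deriv (\<lambda>v. G \<zeta>1 \<zeta>2 v) u);
         Gss = deriv Gs s
     in \<alpha>1\<^sup>2 * det (\<zeta>1 *\<^sub>R hessian \<phi>1 (vector [1, s]) + \<zeta>2 *\<^sub>R hessian \<phi>2 (vector [1, s]))
        = m * (m - \<alpha>1) * (G \<zeta>1 \<zeta>2 s * Gss)
          + \<alpha>2 * (\<alpha>1 - \<alpha>2) * s * (Gs s * Gss)
          - (m - \<alpha>2)\<^sup>2 * (Gs s)\<^sup>2)"
proof (intro allI impI)
  fix \<zeta>1 \<zeta>2 s :: real assume "\<zeta>1\<^sup>2 + \<zeta>2\<^sup>2 = 1 \<and> a < s \<and> s < b"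
  hence s: "a < s" "s < b" by auto
  define k where "k = m / \<alpha>1"
  define \<beta> where "\<beta> = \<alpha>2 / \<alpha>1"
  define g1 where "g1 = (\<lambda>v. \<phi>1 (vector[1,v]))"
  define g2 where "g2 = (\<lambda>v. \<phi>2 (vector[1,v]))"
  have inV: "vector[1,v] \<in> Vcone \<alpha>1 \<alpha>2 a b" if "a < v" "v < b" for v
  proof -
    have "vector[1,v] = qdil \<alpha>1 \<alpha>2 1 (vector[1,v])" by (simp add: qdil_def)
    thus ?thesis using that unfolding Vcone_def by force
  qed
  have twice: "DERIV g v :> deriv g v \<and> DERIV (deriv g) v :> deriv (deriv g) v"
    if vv: "a < v" "v < b" and an: "real_analytic_on2 \<phi> (Vcone \<alpha>1 \<alpha>2 a b)" and gdef: "g = (\<lambda>v. \<phi> (vector[1,v]))"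
    for g \<phi> v
  proof -
    obtain r c where r: "r > 0" and c: "\<And>h. \<bar>h\<bar> < r \<Longrightarrow> (\<lambda>j. c j * h^j) sums \<phi> (vector[1, v+h])"
      using analytic_line[OF an inV[OF vv]] by blast
    show ?thesis by (rule ps_twice[of r c g v]) (use r c gdef in auto)
  qed
  have feq: "\<phi> y = y$1 powr k * g (y$2 * y$1 powr (-\<beta>))"
    if y: "0 < y$1" "a < y$2 * y$1 powr (-\<beta>)" "y$2 * y$1 powr (-\<beta>) < b"
      and gdef: "g = (\<lambda>v. \<phi> (vector[1,v]))"
      and hom: "\<And>x t. x \<in> Vcone \<alpha>1 \<alpha>2 a b \<Longrightarrow> t > 0 \<Longrightarrow> \<phi> (qdil \<alpha>1 \<alpha>2 t x) = t powr m * \<phi> x"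
    for g \<phi> y
  proof -
    define u where "u = y$2 * y$1 powr (-\<beta>)"
    define t where "t = y$1 powr (1/\<alpha>1)"
    have t: "t > 0" using y by (simp add: t_def)
    have "qdil \<alpha>1 \<alpha>2 t (vector[1,u]) = vector[y$1, y$2]"
    proof -
      have 1: "t powr \<alpha>1 = y$1" using y \<open>\<alpha>1 > 0\<close> by (simp add: t_def powr_powr)
      have 2: "t powr \<alpha>2 * u = y$2" using y \<open>\<alpha>1 > 0\<close>
        by (simp add: t_def powr_powr u_def \<beta>_def powr_minus field_simps)
      show ?thesis by (simp add: qdil_def 1 2)
    qed
    hence q: "qdil \<alpha>1 \<alpha>2 t (vector[1,u]) = y" using vec2_eq[of y] by simp
    have uab: "a < u" "u < b" using y by (auto simp: u_def)
    have "\<phi> y = t powr m * \<phi> (vector[1,u])"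
      using hom[OF inV[OF uab] t] q by simp
    moreover have "t powr m = y$1 powr k" using y by (simp add: t_def k_def powr_powr)
    ultimately show ?thesis by (simp add: gdef u_def)
  qed
  have Hs1: "hessian \<phi>1 (vector[1,s]) $1$1 = k*(k-1)*g1 s - \<beta> * s * (2 * k - \<beta> - 1) * deriv g1 s + \<beta>^2 * s^2 * deriv (deriv g1) s"
    "hessian \<phi>1 (vector[1,s]) $1$2 = (k-\<beta>)*deriv g1 s - \<beta> * s * deriv (deriv g1) s"
    "hessian \<phi>1 (vector[1,s]) $2$1 = (k-\<beta>)*deriv g1 s - \<beta> * s * deriv (deriv g1) s"
    "hessian \<phi>1 (vector[1,s]) $2$2 = deriv (deriv g1) s"
    by (rule model_hessian[OF s, where g=g1],
        (use twice[OF _ _ H1(1) g1_def] s feq[OF _ _ _ g1_def] H2 in auto)[3])+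
  have Hs2: "hessian \<phi>2 (vector[1,s]) $1$1 = k*(k-1)*g2 s - \<beta> * s * (2 * k - \<beta> - 1) * deriv g2 s + \<beta>^2 * s^2 * deriv (deriv g2) s"
    "hessian \<phi>2 (vector[1,s]) $1$2 = (k-\<beta>)*deriv g2 s - \<beta> * s * deriv (deriv g2) s"
    "hessian \<phi>2 (vector[1,s]) $2$1 = (k-\<beta>)*deriv g2 s - \<beta> * s * deriv (deriv g2) s"
    "hessian \<phi>2 (vector[1,s]) $2$2 = deriv (deriv g2) s"
    by (rule model_hessian[OF s, where g=g2],
        (use twice[OF _ _ H1(2) g2_def] s feq[OF _ _ _ g2_def] H2 in auto)[3])+
  have Geq: "(\<lambda>v. G \<zeta>1 \<zeta>2 v) = (\<lambda>v. g1 v * \<zeta>1 + g2 v * \<zeta>2)"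
    by (simp add: G_def g1_def g2_def)
  define Gs where "Gs = (\<lambda>u. deriv (\<lambda>v. G \<zeta>1 \<zeta>2 v) u)"
  have Gs_eq: "Gs u = deriv g1 u * \<zeta>1 + deriv g2 u * \<zeta>2" if "u \<in> {a<..<b}" for u
  proof -
    have "DERIV (\<lambda>v. g1 v * \<zeta>1 + g2 v * \<zeta>2) u :> deriv g1 u * \<zeta>1 + deriv g2 u * \<zeta>2"
      using twice[OF _ _ H1(1) g1_def, of u] twice[OF _ _ H1(2) g2_def, of u] that
      by (auto intro!: derivative_eq_intros)
    thus ?thesis unfolding Gs_def Geq by (rule DERIV_imp_deriv)
  qed
  have "DERIV Gs s :> deriv (deriv g1) s * \<zeta>1 + deriv (deriv g2) s * \<zeta>2"
  proof (rule has_field_derivative_transform_within_open[where S="{a<..<b}"])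
    show "DERIV (\<lambda>u. deriv g1 u * \<zeta>1 + deriv g2 u * \<zeta>2) s :> deriv (deriv g1) s * \<zeta>1 + deriv (deriv g2) s * \<zeta>2"
      using twice[OF s H1(1) g1_def] twice[OF s H1(2) g2_def]
      by (auto intro!: derivative_eq_intros)
  qed (use s Gs_eq in auto)
  hence Gss: "deriv Gs s = deriv (deriv g1) s * \<zeta>1 + deriv (deriv g2) s * \<zeta>2" by (rule DERIV_imp_deriv)
  have Gs_s: "Gs s = deriv g1 s * \<zeta>1 + deriv g2 s * \<zeta>2" using Gs_eq s by auto
  have G_s: "G \<zeta>1 \<zeta>2 s = g1 s * \<zeta>1 + g2 s * \<zeta>2" by (simp add: G_def g1_def g2_def)
  have det: "det (\<zeta>1 *\<^sub>R hessian \<phi>1 (vector [1, s]) + \<zeta>2 *\<^sub>R hessian \<phi>2 (vector [1, s]))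
     = k*(k-1)*G \<zeta>1 \<zeta>2 s*deriv Gs s + \<beta>*(1-\<beta>) * s * Gs s * deriv Gs s - (k-\<beta>)^2*(Gs s)^2"
    unfolding det_2 Gss Gs_s G_s
    by (simp add: Hs1 Hs2 algebra_simps power2_eq_square)
  show "let Gs = (\<lambda>u. deriv (\<lambda>v. G \<zeta>1 \<zeta>2 v) u); Gss = deriv Gs s
     in \<alpha>1\<^sup>2 * det (\<zeta>1 *\<^sub>R hessian \<phi>1 (vector [1, s]) + \<zeta>2 *\<^sub>R hessian \<phi>2 (vector [1, s]))
        = m * (m - \<alpha>1) * (G \<zeta>1 \<zeta>2 s * Gss)
          + \<alpha>2 * (\<alpha>1 - \<alpha>2) * s * (Gs s * Gss)
          - (m - \<alpha>2)\<^sup>2 * (Gs s)\<^sup>2"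
    unfolding Let_def Gs_def[symmetric] det k_def \<beta>_def
    using alg2[of \<alpha>1 m "G \<zeta>1 \<zeta>2 s" "deriv Gs s" \<alpha>2 s "Gs s"] \<open>\<alpha>1 > 0\<close>
    by (simp add: mult.assoc)
qed

end
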